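(* Let $n\ge 5$, $k\in\{2,\dots,n-2\}$, and let $P,Q$ be generic planar $n$-gons such that $Q$ is inscribed in $P$ and $T_k(Q)$ is inscribed in $T_k(P)$. Then $T_k^2(Q)$ is inscribed in $T_k^2(P)$, and consequently $T_k^m(Q)$ is inscribed in $T_k^m(P)$ for every $m\ge 1$.
   Context: For an $n$-gon $P=(P_i)_{i\in\mathbb Z/n}$ in the projective plane and $k\in\{2,\dots,n-2\}$, the $k$-diagonal pentagram map is $T_k(P)=P'$ with $P'_i=P_iP_{i+k}\cap P_{i+1}P_{i+k+1}$ (here $XY$ is the line through $X,Y$). For $k=2$ this is Schwartz's pentagram map. A polygon $Q$ with the same number of vertices as $P$ is inscribed in $P$ if $Q_i$ lies on the line $P_iP_{i+1}$ for all $i$. "Generic" means that all iterates considered are well defined. *)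

theory Defs
  imports "HOL-Analysis.Analysis" "HOL-Analysis.Cross3"
begin

text \<open>Real projective plane in homogeneous coordinates: a point (or a line) is
represented by a nonzero vector of real^3, up to nonzero scalar multiples.
The line through X and Y is the cross product X x Y (zero iff X, Y coincide
projectively or one of them is undefined); the intersection of two lines L, M
is L x M (zero iff the lines coincide or one is undefined).\<close>

definition join :: "real^3 \<Rightarrow> real^3 \<Rightarrow> real^3" where
  "join X Y = cross3 X Y"

definition meet :: "real^3 \<Rightarrow> real^3 \<Rightarrow> real^3" where
  "meet L M = cross3 L M"

definition incident :: "real^3 \<Rightarrow> real^3 \<Rightarrow> bool" where
  "incident X L \<longleftrightarrow> L \<bullet> X = 0"

definition ngon :: "nat \<Rightarrow> (nat \<Rightarrow> real^3) \<Rightarrow> bool" where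
  "ngon n P \<longleftrightarrow> (\<forall>i. P (i + n) = P i)"

definition Tk :: "nat \<Rightarrow> (nat \<Rightarrow> real^3) \<Rightarrow> (nat \<Rightarrow> real^3)" where
  "Tk k P i = meet (join (P i) (P (i + k))) (join (P (Suc i)) (P (Suc (i + k))))"

definition inscribed :: "(nat \<Rightarrow> real^3) \<Rightarrow> (nat \<Rightarrow> real^3) \<Rightarrow> bool" where
  "inscribed Q P \<longleftrightarrow> (\<forall>i. incident (Q i) (join (P i) (P (Suc i))))"

text \<open>Generic: all iterates are well defined, i.e. every vertex of every iterate
is a genuine projective point, and consecutive vertices are distinct (so the
side lines used in the notion of inscribed polygon are defined).\<close>
definition generic :: "nat \<Rightarrow> (nat \<Rightarrow> real^3) \<Rightarrow> bool" where
  "generic k P \<longleftrightarrow> (\<forall>m i. (Tk k ^^ m) P i \<noteq> 0 \<and>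
      join ((Tk k ^^ m) P i) ((Tk k ^^ m) P (Suc i)) \<noteq> 0)"

end

theory Submission
  imports Defs
begin

context includes cross3_syntax
begin

lemma par_eq: fixes x y :: "real^3"
  assumes "x \<times> y = 0" "y \<noteq> 0" shows "x = ((x \<bullet> y) / (y \<bullet> y)) *\<^sub>R y"
proof -
  have "y \<times> (x \<times> y) = (y \<bullet> y) *\<^sub>R x - (y \<bullet> x) *\<^sub>R y" by (rule Lagrange)
  then have e: "(y \<bullet> y) *\<^sub>R x = (y \<bullet> x) *\<^sub>R y" using assms(1) by simp
  have n: "y \<bullet> y \<noteq> 0" using assms(2) by simp
  have "x = (1 / (y \<bullet> y)) *\<^sub>R ((y \<bullet> y) *\<^sub>R x)" using n by simp
  also have "\<dots> = ((x \<bullet> y) / (y \<bullet> y)) *\<^sub>R y" unfolding e by (simp add: inner_commute)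
  finally show ?thesis .
qed

lemma par_ex: fixes x y :: "real^3"
  assumes "x \<times> y = 0" "y \<noteq> 0" obtains k where "x = k *\<^sub>R y"
  using par_eq[OF assms] by blast

lemma perp_cross_par: fixes x p q :: "real^3"
  assumes "x \<bullet> p = 0" "x \<bullet> q = 0" shows "x \<times> (p \<times> q) = 0"
  using assms by (simp add: Lagrange)

lemma perp2_cross: fixes x y p :: "real^3"
  assumes "x \<bullet> p = 0" "y \<bullet> p = 0" shows "(x \<times> y) \<times> p = 0"
proof -
  have "p \<times> (x \<times> y) = 0" using assms by (simp add: Lagrange inner_commute)
  then show ?thesis by (metis cross_skew neg_equal_0_iff_equal)
qed

lemma par2: fixes x y p q :: "real^3"
  assumes "x \<bullet> p = 0" "x \<bullet> q = 0" "y \<bullet> p = 0" "y \<bullet> q = 0" "p \<times> q \<noteq> 0"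
  shows "x \<times> y = 0"
proof -
  obtain s where s: "x = s *\<^sub>R (p \<times> q)" using par_ex[OF perp_cross_par[OF assms(1,2)] assms(5)] by blast
  obtain t where t: "y = t *\<^sub>R (p \<times> q)" using par_ex[OF perp_cross_par[OF assms(3,4)] assms(5)] by blast
  show ?thesis unfolding s t by (simp add: cross_mult_left cross_mult_right)
qed

lemma par_perp: fixes x y w :: "real^3"
  assumes "x \<times> y = 0" "y \<noteq> 0" "y \<bullet> w = 0" shows "x \<bullet> w = 0"
proof -
  obtain s where s: "x = s *\<^sub>R y" using par_ex[OF assms(1,2)] by blast
  show ?thesis unfolding s using assms(3) by simp
qed

lemma coplanar: fixes x y z p :: "real^3"
  assumes "x \<bullet> p = 0" "y \<bullet> p = 0" "z \<bullet> p = 0" "p \<noteq> 0" shows "(x \<times> y) \<bullet> z = 0"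
proof -
  obtain s where s: "x \<times> y = s *\<^sub>R p" using par_ex[OF perp2_cross[OF assms(1,2)] assms(4)] by blast
  show ?thesis unfolding s using assms(3) by (simp add: inner_commute)
qed

lemma tp1: fixes x y z :: "real^3"
  assumes "x \<times> z = 0" "z \<noteq> 0" shows "(x \<times> y) \<bullet> z = 0"
proof -
  obtain s where s: "x = s *\<^sub>R z" using par_ex[OF assms] by blast
  show ?thesis unfolding s by (simp add: cross_mult_left dot_cross_self)
qed

lemma tp2: fixes x y z :: "real^3"
  assumes "y \<times> z = 0" "z \<noteq> 0" shows "(x \<times> y) \<bullet> z = 0"
proof -
  obtain s where s: "y = s *\<^sub>R z" using par_ex[OF assms] by blast
  show ?thesis unfolding s by (simp add: cross_mult_right dot_cross_self)
qed

lemma par_sub1: fixes x y z w :: "real^3"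
  assumes "x \<times> z = 0" "z \<noteq> 0" "(z \<times> y) \<bullet> w = 0" shows "(x \<times> y) \<bullet> w = 0"
proof -
  obtain s where s: "x = s *\<^sub>R z" using par_ex[OF assms(1,2)] by blast
  show ?thesis unfolding s using assms(3) by (simp add: cross_mult_left)
qed

lemma par_sub2: fixes x y z w :: "real^3"
  assumes "y \<times> z = 0" "z \<noteq> 0" "(x \<times> z) \<bullet> w = 0" shows "(x \<times> y) \<bullet> w = 0"
proof -
  obtain s where s: "y = s *\<^sub>R z" using par_ex[OF assms(1,2)] by blast
  show ?thesis unfolding s using assms(3) by (simp add: cross_mult_right)
qed

lemma cc: fixes w x y z :: "real^3"
  shows "(w \<times> x) \<times> (y \<times> z) = (w \<bullet> (x \<times> z)) *\<^sub>R y - (w \<bullet> (x \<times> y)) *\<^sub>R z"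
  by (simp add: cross_cross_det dot_cross_det)

lemma des2: fixes v1 v2 v3 :: "real^3"
  shows "((a1 *\<^sub>R v1 - b1 *\<^sub>R v2) \<bullet> ((a2 *\<^sub>R v1 - b2 *\<^sub>R v3) \<times> (a3 *\<^sub>R v2 - b3 *\<^sub>R v3)))
    = (a1*b2*a3 - b1*a2*b3) * (v1 \<bullet> (v2 \<times> v3))"
  unfolding cross3_def inner_vec_def sum_3 vector_def by simp algebra

lemma des3: fixes u1 u2 u3 v1 v2 v3 :: "real^3"
  shows "(u1 \<bullet> (u2 \<times> v2)) * (u2 \<bullet> (u3 \<times> v3)) * (u1 \<bullet> (u3 \<times> v1))
       - (u1 \<bullet> (u3 \<times> v3)) * (u1 \<bullet> (u2 \<times> v1)) * (u2 \<bullet> (u3 \<times> v2))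
       = - (u1 \<bullet> (u2 \<times> u3)) * ((u1 \<times> v1) \<bullet> ((u2 \<times> v2) \<times> (u3 \<times> v3)))"
  unfolding cross3_def inner_vec_def sum_3 vector_def by simp algebra

lemma desargues: fixes u1 u2 u3 v1 v2 v3 :: "real^3"
  shows "((u1 \<times> u2) \<times> (v1 \<times> v2)) \<bullet> (((u1 \<times> u3) \<times> (v1 \<times> v3)) \<times> ((u2 \<times> u3) \<times> (v2 \<times> v3)))
   = - (u1 \<bullet> (u2 \<times> u3)) * (v1 \<bullet> (v2 \<times> v3)) * ((u1 \<times> v1) \<bullet> ((u2 \<times> v2) \<times> (u3 \<times> v3)))"
proof -
  have "((u1 \<times> u2) \<times> (v1 \<times> v2)) \<bullet> (((u1 \<times> u3) \<times> (v1 \<times> v3)) \<times> ((u2 \<times> u3) \<times> (v2 \<times> v3)))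
     = ((u1 \<bullet> (u2 \<times> v2)) * (u1 \<bullet> (u3 \<times> v1)) * (u2 \<bullet> (u3 \<times> v3))
        - (u1 \<bullet> (u2 \<times> v1)) * (u1 \<bullet> (u3 \<times> v3)) * (u2 \<bullet> (u3 \<times> v2))) * (v1 \<bullet> (v2 \<times> v3))"
    unfolding cc by (rule des2)
  also have "\<dots> = - (u1 \<bullet> (u2 \<times> u3)) * ((u1 \<times> v1) \<bullet> ((u2 \<times> v2) \<times> (u3 \<times> v3))) * (v1 \<bullet> (v2 \<times> v3))"
  proof -
    have e: "(u1 \<bullet> (u2 \<times> v2)) * (u1 \<bullet> (u3 \<times> v1)) * (u2 \<bullet> (u3 \<times> v3))
        - (u1 \<bullet> (u2 \<times> v1)) * (u1 \<bullet> (u3 \<times> v3)) * (u2 \<bullet> (u3 \<times> v2))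
        = - (u1 \<bullet> (u2 \<times> u3)) * ((u1 \<times> v1) \<bullet> ((u2 \<times> v2) \<times> (u3 \<times> v3)))"
      using des3[of u1 u2 v2 u3 v3 v1] by (simp add: mult_ac)
    show ?thesis by (simp only: e)
  qed
  finally show ?thesis by (simp add: algebra_simps)
qed

lemma izs: fixes x y :: "real^3" shows "x \<bullet> y = 0 \<Longrightarrow> y \<bullet> x = 0" by (simp add: inner_commute)
lemma czs: fixes x y :: "real^3" shows "(x \<times> y = 0) = (y \<times> x = 0)" by (metis cross_skew neg_equal_0_iff_equal)

lemma core:
  fixes d1 d2 d3 d4 X Y r l m a b c e :: "real^3"
  assumes hX1: "d1 \<bullet> X = 0" and hX3: "d3 \<bullet> X = 0" and hY2: "d2 \<bullet> Y = 0" and hY4: "d4 \<bullet> Y = 0"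
    and hr: "r \<bullet> (X \<times> Y) = 0" and hrl: "r \<bullet> l = 0" and hrm: "r \<bullet> m = 0"
    and hal: "a \<bullet> l = 0" and hbl: "b \<bullet> l = 0" and hcm: "c \<bullet> m = 0" and hem: "e \<bullet> m = 0"
    and ha1: "a \<bullet> d1 = 0" and hb2: "b \<bullet> d2 = 0" and hc3: "c \<bullet> d3 = 0" and he4: "e \<bullet> d4 = 0"
    and nU: "d1 \<times> d2 \<noteq> 0" and nV: "d3 \<times> d4 \<noteq> 0" and nab: "a \<times> b \<noteq> 0" and nce: "c \<times> e \<noteq> 0"
    and nX: "X \<noteq> 0" and nY: "Y \<noteq> 0" and ns: "X \<times> Y \<noteq> 0" and nr: "r \<noteq> 0"
    and nl: "l \<noteq> 0" and nm: "m \<noteq> 0"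
  shows "((a \<times> c) \<times> (b \<times> e)) \<bullet> ((d1 \<times> d2) \<times> (d3 \<times> d4)) = 0"
proof -
  define U where "U = d1 \<times> d2"
  define V where "V = d3 \<times> d4"
  define s where "s = X \<times> Y"
  have U0: "U \<noteq> 0" and V0: "V \<noteq> 0" and s0: "s \<noteq> 0" using nU nV ns by (simp_all add: U_def V_def s_def)
  have d10: "d1 \<noteq> 0" and d20: "d2 \<noteq> 0" using nU by auto
  have d30: "d3 \<noteq> 0" and d40: "d4 \<noteq> 0" using nV by auto
  have U1: "U \<bullet> d1 = 0" and U2: "U \<bullet> d2 = 0" unfolding U_def by (simp_all add: dot_cross_self inner_commute)
  have V3: "V \<bullet> d3 = 0" and V4: "V \<bullet> d4 = 0" unfolding V_def by (simp_all add: dot_cross_self inner_commute)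
  have Xs: "X \<bullet> s = 0" and Ys: "Y \<bullet> s = 0" unfolding s_def by (simp_all add: dot_cross_self)
  have rs: "r \<bullet> s = 0" using hr by (simp add: s_def)
  have X1: "X \<bullet> d1 = 0" and X3: "X \<bullet> d3 = 0" and Y2: "Y \<bullet> d2 = 0" and Y4: "Y \<bullet> d4 = 0"
    using hX1 hX3 hY2 hY4 by (simp_all add: inner_commute)
  have G: "((a \<times> c) \<times> (b \<times> e)) \<bullet> (U \<times> V)
      = ((a \<times> c) \<bullet> U) * ((b \<times> e) \<bullet> V) - ((a \<times> c) \<bullet> V) * ((b \<times> e) \<bullet> U)"
    by (rule dot_cross)
  have Ua: "U \<times> a = - (a \<bullet> d2) *\<^sub>R d1"
    using Lagrange[of a d1 d2] ha1 cross_skew[of U a] by (simp add: U_def)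
  have Vc: "V \<times> c = - (c \<bullet> d4) *\<^sub>R d3"
    using Lagrange[of c d3 d4] hc3 cross_skew[of V c] by (simp add: V_def)
  have Ub: "U \<times> b = (b \<bullet> d1) *\<^sub>R d2"
    using Lagrange[of b d1 d2] hb2 cross_skew[of U b] by (simp add: U_def)
  have Ve: "V \<times> e = (e \<bullet> d3) *\<^sub>R d4"
    using Lagrange[of e d3 d4] he4 cross_skew[of V e] by (simp add: V_def)
  obtain k1 where k1: "d1 \<times> d3 = k1 *\<^sub>R X" using par_ex[OF perp2_cross[OF hX1 hX3] nX] by blast
  obtain k2 where k2: "d2 \<times> d4 = k2 *\<^sub>R Y" using par_ex[OF perp2_cross[OF hY2 hY4] nY] by blast
  obtain k3 where k3: "a \<times> b = k3 *\<^sub>R l" using par_ex[OF perp2_cross[OF hal hbl] nl] by blast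
  obtain k4 where k4: "c \<times> e = k4 *\<^sub>R m" using par_ex[OF perp2_cross[OF hcm hem] nm] by blast
  have lr: "l \<bullet> r = 0" and mr: "m \<bullet> r = 0" using hrl hrm by (simp_all add: inner_commute)
  obtain k5 where k5: "l \<times> m = k5 *\<^sub>R r" using par_ex[OF perp2_cross[OF lr mr] nr] by blast
  have XYr: "X \<bullet> (Y \<times> r) = 0" using hr by (metis cross_triple inner_commute)
  have D0: "((U \<times> a) \<times> (V \<times> c)) \<bullet> (((U \<times> b) \<times> (V \<times> e)) \<times> ((a \<times> b) \<times> (c \<times> e))) = 0"
    unfolding Ua Vc Ub Ve k3 k4
    by (simp add: cross_mult_left cross_mult_right k1 k2 k5 XYr)
  have main: "(U \<bullet> (a \<times> b)) * (V \<bullet> (c \<times> e)) * (((a \<times> c) \<times> (b \<times> e)) \<bullet> (U \<times> V)) = 0"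
    using desargues[of U a V c b e] D0 by (simp add: inner_commute)
  have O0: "d1 \<bullet> X = 0" "d3 \<bullet> X = 0" "d2 \<bullet> Y = 0" "d4 \<bullet> Y = 0"
    "r \<bullet> l = 0" "r \<bullet> m = 0" "a \<bullet> l = 0" "b \<bullet> l = 0" "c \<bullet> m = 0" "e \<bullet> m = 0"
    "a \<bullet> d1 = 0" "b \<bullet> d2 = 0" "c \<bullet> d3 = 0" "e \<bullet> d4 = 0"
    "U \<bullet> d1 = 0" "U \<bullet> d2 = 0" "V \<bullet> d3 = 0" "V \<bullet> d4 = 0" "X \<bullet> s = 0" "Y \<bullet> s = 0" "r \<bullet> s = 0"
    using assms U1 U2 V3 V4 Xs Ys rs by auto
  note O = O0 O0[THEN izs]
  note N = U0 V0 s0 d10 d20 d30 d40 nX nY nr nl nm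
  have T12: "((a \<times> c) \<times> (b \<times> e)) \<bullet> (U \<times> V) = 0"
  proof (cases "U \<bullet> (a \<times> b) = 0")
    case True
    have k30: "k3 \<noteq> 0" using nab k3 by auto
    have Ul: "U \<bullet> l = 0" using True k3 k30 by simp
    have "l \<times> d1 = 0 \<or> l \<times> d2 = 0"
    proof (rule ccontr)
      assume "\<not> (l \<times> d1 = 0 \<or> l \<times> d2 = 0)"
      then have "a \<times> U = 0" "b \<times> U = 0"
        using par2[where x=a and p=l and q=d1 and y=U] par2[where x=b and p=l and q=d2 and y=U] Ul O by auto
      then show False using nab U0 by (metis par_ex cross_mult_left cross_mult_right cross_refl scale_eq_0_iff)
    qed
    then show ?thesis
    proof
      assume ld1: "l \<times> d1 = 0"
      have bd1: "b \<bullet> d1 = 0" using par_perp[where x=d1 and y=l and w=b] ld1 nl O by (simp add: czs inner_commute)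
      have bU: "b \<times> U = 0" using par2[where x=b and p=d1 and q=d2 and y=U] bd1 nU O by (simp add: U_def)
      have T2: "(b \<times> e) \<bullet> U = 0" using tp1[OF bU U0] .
      have rd1: "r \<bullet> d1 = 0" using par_perp[where x=d1 and y=l and w=r] ld1 nl O by (simp add: czs inner_commute)
      have T1: "(a \<times> c) \<bullet> U = 0 \<or> (b \<times> e) \<bullet> V = 0"
      proof (cases "d1 \<times> s = 0")
        case False
        have rX: "r \<times> X = 0" using par2[where x=r and p=d1 and q=s and y=X] False rd1 O by auto
        have Xm: "X \<bullet> m = 0" using par_perp[where x=X and y=r and w=m] rX nr O by (simp add: czs inner_commute)
        show ?thesis
        proof (cases "m \<times> d3 = 0")
          case False
          have cX: "c \<times> X = 0" using par2[where x=c and p=m and q=d3 and y=X] False Xm O by auto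
          have cd1: "c \<bullet> d1 = 0" using par_perp[where x=c and y=X and w=d1] cX nX O by auto
          show ?thesis using coplanar[where x=a and y=c and z=U and p=d1] cd1 d10 O by auto
        next
          case True
          have ed3: "e \<bullet> d3 = 0" using par_perp[where x=d3 and y=m and w=e] True nm O by (simp add: czs inner_commute)
          have eV: "e \<times> V = 0" using par2[where x=e and p=d3 and q=d4 and y=V] ed3 nV O by (simp add: V_def)
          show ?thesis using tp2[OF eV V0] by simp
        qed
      next
        case True
        have Yd1: "Y \<bullet> d1 = 0" using par_perp[where x=d1 and y=s and w=Y] True s0 O by (simp add: czs inner_commute)
        have UY: "U \<times> Y = 0" using par2[where x=U and p=d1 and q=d2 and y=Y] Yd1 nU O by (simp add: U_def)
        have Ud4: "U \<bullet> d4 = 0" using par_perp[where x=U and y=Y and w=d4] UY nY O by auto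
        have "(U \<times> e) \<bullet> V = 0" using coplanar[where x=U and y=e and z=V and p=d4] Ud4 d40 O by auto
        then show ?thesis using par_sub1[OF bU U0] by blast
      qed
      show ?thesis using T1 T2 unfolding G by auto
    next
      assume ld2: "l \<times> d2 = 0"
      have ad2: "a \<bullet> d2 = 0" using par_perp[where x=d2 and y=l and w=a] ld2 nl O by (simp add: czs inner_commute)
      have aU: "a \<times> U = 0" using par2[where x=a and p=d1 and q=d2 and y=U] ad2 nU O by (simp add: U_def)
      have T1: "(a \<times> c) \<bullet> U = 0" using tp1[OF aU U0] .
      have rd2: "r \<bullet> d2 = 0" using par_perp[where x=d2 and y=l and w=r] ld2 nl O by (simp add: czs inner_commute)
      have T2: "(a \<times> c) \<bullet> V = 0 \<or> (b \<times> e) \<bullet> U = 0"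
      proof (cases "d2 \<times> s = 0")
        case False
        have rY: "r \<times> Y = 0" using par2[where x=r and p=d2 and q=s and y=Y] False rd2 O by auto
        have Ym: "Y \<bullet> m = 0" using par_perp[where x=Y and y=r and w=m] rY nr O by (simp add: czs inner_commute)
        show ?thesis
        proof (cases "m \<times> d4 = 0")
          case False
          have eY: "e \<times> Y = 0" using par2[where x=e and p=m and q=d4 and y=Y] False Ym O by auto
          have ed2: "e \<bullet> d2 = 0" using par_perp[where x=e and y=Y and w=d2] eY nY O by auto
          show ?thesis using coplanar[where x=b and y=e and z=U and p=d2] ed2 d20 O by auto
        next
          case True
          have cd4: "c \<bullet> d4 = 0" using par_perp[where x=d4 and y=m and w=c] True nm O by (simp add: czs inner_commute)
          have cV: "c \<times> V = 0" using par2[where x=c and p=d3 and q=d4 and y=V] cd4 nV O by (simp add: V_def)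
          show ?thesis using tp2[OF cV V0] by simp
        qed
      next
        case True
        have Xd2: "X \<bullet> d2 = 0" using par_perp[where x=d2 and y=s and w=X] True s0 O by (simp add: czs inner_commute)
        have UX: "U \<times> X = 0" using par2[where x=U and p=d1 and q=d2 and y=X] Xd2 nU O by (simp add: U_def)
        have Ud3: "U \<bullet> d3 = 0" using par_perp[where x=U and y=X and w=d3] UX nX O by auto
        have "(U \<times> c) \<bullet> V = 0" using coplanar[where x=U and y=c and z=V and p=d3] Ud3 d30 O by auto
        then show ?thesis using par_sub1[OF aU U0] by blast
      qed
      show ?thesis using T1 T2 unfolding G by auto
    qed
  next
    case False
    show ?thesis
    proof (cases "V \<bullet> (c \<times> e) = 0")
    case False
    then show ?thesis using main \<open>U \<bullet> (a \<times> b) \<noteq> 0\<close> by simp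
    next
    case True
    note Vce = True
    have k40: "k4 \<noteq> 0" using nce k4 by auto
    have Vm: "V \<bullet> m = 0" using Vce k4 k40 by simp
    have "m \<times> d3 = 0 \<or> m \<times> d4 = 0"
    proof (rule ccontr)
      assume "\<not> (m \<times> d3 = 0 \<or> m \<times> d4 = 0)"
      then have "c \<times> V = 0" "e \<times> V = 0"
        using par2[where x=c and p=m and q=d3 and y=V] par2[where x=e and p=m and q=d4 and y=V] Vm O by auto
      then show False using nce V0 by (metis par_ex cross_mult_left cross_mult_right cross_refl scale_eq_0_iff)
    qed
    then show ?thesis
    proof
      assume md4: "m \<times> d4 = 0"
      have cd4: "c \<bullet> d4 = 0" using par_perp[where x=d4 and y=m and w=c] md4 nm O by (simp add: czs inner_commute)
      have cV: "c \<times> V = 0" using par2[where x=c and p=d3 and q=d4 and y=V] cd4 nV O by (simp add: V_def)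
      have T2: "(a \<times> c) \<bullet> V = 0" using tp2[OF cV V0] .
      have rd4: "r \<bullet> d4 = 0" using par_perp[where x=d4 and y=m and w=r] md4 nm O by (simp add: czs inner_commute)
      have T1: "(a \<times> c) \<bullet> U = 0 \<or> (b \<times> e) \<bullet> V = 0"
      proof (cases "d4 \<times> s = 0")
        case False
        have rY: "r \<times> Y = 0" using par2[where x=r and p=d4 and q=s and y=Y] False rd4 O by auto
        have Yl: "Y \<bullet> l = 0" using par_perp[where x=Y and y=r and w=l] rY nr O by (simp add: czs inner_commute)
        show ?thesis
        proof (cases "l \<times> d2 = 0")
          case False
          have bY: "b \<times> Y = 0" using par2[where x=b and p=l and q=d2 and y=Y] False Yl O by auto
          have bd4: "b \<bullet> d4 = 0" using par_perp[where x=b and y=Y and w=d4] bY nY O by auto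
          show ?thesis using coplanar[where x=b and y=e and z=V and p=d4] bd4 d40 O by auto
        next
          case True
          have ad2: "a \<bullet> d2 = 0" using par_perp[where x=d2 and y=l and w=a] True nl O by (simp add: czs inner_commute)
          have aU: "a \<times> U = 0" using par2[where x=a and p=d1 and q=d2 and y=U] ad2 nU O by (simp add: U_def)
          show ?thesis using tp1[OF aU U0] by simp
        qed
      next
        case True
        have Xd4: "X \<bullet> d4 = 0" using par_perp[where x=d4 and y=s and w=X] True s0 O by (simp add: czs inner_commute)
        have VX: "V \<times> X = 0" using par2[where x=V and p=d3 and q=d4 and y=X] Xd4 nV O by (simp add: V_def)
        have Vd1: "V \<bullet> d1 = 0" using par_perp[where x=V and y=X and w=d1] VX nX O by auto
        have "(a \<times> V) \<bullet> U = 0" using coplanar[where x=a and y=V and z=U and p=d1] Vd1 d10 O by auto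
        then show ?thesis using par_sub2[OF cV V0] by blast
      qed
      show ?thesis using T1 T2 unfolding G by auto
    next
      assume md3: "m \<times> d3 = 0"
      have ed3: "e \<bullet> d3 = 0" using par_perp[where x=d3 and y=m and w=e] md3 nm O by (simp add: czs inner_commute)
      have eV: "e \<times> V = 0" using par2[where x=e and p=d3 and q=d4 and y=V] ed3 nV O by (simp add: V_def)
      have T1: "(b \<times> e) \<bullet> V = 0" using tp2[OF eV V0] .
      have rd3: "r \<bullet> d3 = 0" using par_perp[where x=d3 and y=m and w=r] md3 nm O by (simp add: czs inner_commute)
      have T2: "(a \<times> c) \<bullet> V = 0 \<or> (b \<times> e) \<bullet> U = 0"
      proof (cases "d3 \<times> s = 0")
        case False
        have rX: "r \<times> X = 0" using par2[where x=r and p=d3 and q=s and y=X] False rd3 O by auto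
        have Xl: "X \<bullet> l = 0" using par_perp[where x=X and y=r and w=l] rX nr O by (simp add: czs inner_commute)
        show ?thesis
        proof (cases "l \<times> d1 = 0")
          case False
          have aX: "a \<times> X = 0" using par2[where x=a and p=l and q=d1 and y=X] False Xl O by auto
          have ad3: "a \<bullet> d3 = 0" using par_perp[where x=a and y=X and w=d3] aX nX O by auto
          show ?thesis using coplanar[where x=a and y=c and z=V and p=d3] ad3 d30 O by auto
        next
          case True
          have bd1: "b \<bullet> d1 = 0" using par_perp[where x=d1 and y=l and w=b] True nl O by (simp add: czs inner_commute)
          have bU: "b \<times> U = 0" using par2[where x=b and p=d1 and q=d2 and y=U] bd1 nU O by (simp add: U_def)
          show ?thesis using tp1[OF bU U0] by simp
        qed
      next
        case True
        have Yd3: "Y \<bullet> d3 = 0" using par_perp[where x=d3 and y=s and w=Y] True s0 O by (simp add: czs inner_commute)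
        have VY: "V \<times> Y = 0" using par2[where x=V and p=d3 and q=d4 and y=Y] Yd3 nV O by (simp add: V_def)
        have Vd2: "V \<bullet> d2 = 0" using par_perp[where x=V and y=Y and w=d2] VY nY O by auto
        have "(b \<times> V) \<bullet> U = 0" using coplanar[where x=b and y=V and z=U and p=d2] Vd2 d20 O by auto
        then show ?thesis using par_sub2[OF eV V0] by blast
      qed
      show ?thesis using T1 T2 unfolding G by auto
    qed
    qed
  qed
  show ?thesis using T12 unfolding U_def V_def .
qed

lemma Tk_eq: "Tk k P i = (P i \<times> P (i + k)) \<times> (P (Suc i) \<times> P (Suc i + k))"
  by (simp add: Tk_def meet_def join_def)

lemma cc_same: fixes w x z :: "real^3" shows "(w \<times> x) \<times> (x \<times> z) = (w \<bullet> (x \<times> z)) *\<^sub>R x"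
  using cc[of w x x z] by simp

lemma join_T: "join (Tk k P j) (Tk k P (Suc j))
   = ((P j \<times> P (j + k)) \<bullet> ((P (Suc j) \<times> P (Suc j + k)) \<times> (P (Suc (Suc j)) \<times> P (Suc (Suc j) + k))))
     *\<^sub>R (P (Suc j) \<times> P (Suc j + k))"
  unfolding join_def Tk_eq by (rule cc_same)

lemma side_to: assumes "join (Tk k P j) (Tk k P (Suc j)) \<noteq> 0"
  and "incident R (join (Tk k P j) (Tk k P (Suc j)))"
  shows "R \<bullet> (P (Suc j) \<times> P (Suc j + k)) = 0"
  using assms unfolding incident_def join_T by (auto simp: inner_commute)

lemma side_from: assumes "R \<bullet> (P (Suc j) \<times> P (Suc j + k)) = 0"
  shows "incident R (join (Tk k P j) (Tk k P (Suc j)))"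
  using assms unfolding incident_def join_T by (simp add: inner_commute)

lemma one_step:
  assumes P0: "\<forall>j. P j \<noteq> 0" and Ps: "\<forall>j. join (P j) (P (Suc j)) \<noteq> 0"
    and TP0: "\<forall>j. Tk k P j \<noteq> 0" and TPs: "\<forall>j. join (Tk k P j) (Tk k P (Suc j)) \<noteq> 0"
    and Q0: "\<forall>j. Q j \<noteq> 0" and TQ0: "\<forall>j. Tk k Q j \<noteq> 0"
    and TQs: "\<forall>j. join (Tk k Q j) (Tk k Q (Suc j)) \<noteq> 0"
    and iQ: "inscribed Q P" and iT: "inscribed (Tk k Q) (Tk k P)"
  shows "inscribed (Tk k (Tk k Q)) (Tk k (Tk k P))"
  unfolding inscribed_def
proof
  fix i
  have hT: "Tk k Q j \<bullet> (P (Suc j) \<times> P (Suc j + k)) = 0" for j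
    using side_to[OF spec[OF TPs, of j]] iT unfolding inscribed_def by blast
  have hQ: "(P j \<times> P (Suc j)) \<bullet> Q j = 0" for j
    using iQ unfolding inscribed_def incident_def join_def by blast
  define a where "a = Tk k Q i"
  define b where "b = Tk k Q (Suc i)"
  define c where "c = Tk k Q (i + k)"
  define e where "e = Tk k Q (Suc (i + k))"
  define l where "l = Q (Suc i) \<times> Q (Suc i + k)"
  define m where "m = Q (Suc i + k) \<times> Q (Suc i + k + k)"
  define r where "r = Q (Suc i + k)"
  define X where "X = P (Suc i + k)"
  define Y where "Y = P (Suc (Suc i + k))"
  define d1 where "d1 = P (Suc i) \<times> P (Suc i + k)"
  define d2 where "d2 = P (Suc (Suc i)) \<times> P (Suc (Suc i) + k)"
  define d3 where "d3 = P (Suc i + k) \<times> P (Suc i + k + k)"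
  define d4 where "d4 = P (Suc (Suc i + k)) \<times> P (Suc (Suc i + k) + k)"
  have U: "d1 \<times> d2 = Tk k P (Suc i)" unfolding d1_def d2_def Tk_eq by simp
  have V: "d3 \<times> d4 = Tk k P (Suc i + k)" unfolding d3_def d4_def Tk_eq by simp
  have al: "a = (Q i \<times> Q (i + k)) \<times> l" unfolding a_def l_def Tk_eq by simp
  have bl: "b = l \<times> (Q (Suc (Suc i)) \<times> Q (Suc (Suc i) + k))" unfolding b_def l_def Tk_eq by simp
  have cm: "c = (Q (i + k) \<times> Q (i + k + k)) \<times> m" unfolding c_def m_def Tk_eq by simp
  have em: "e = m \<times> (Q (Suc (Suc i + k)) \<times> Q (Suc (Suc i + k) + k))" unfolding e_def m_def Tk_eq by simp
  have "((a \<times> c) \<times> (b \<times> e)) \<bullet> ((d1 \<times> d2) \<times> (d3 \<times> d4)) = 0"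
  proof (rule core)
    show "d1 \<bullet> X = 0" "d3 \<bullet> X = 0" "d2 \<bullet> Y = 0" "d4 \<bullet> Y = 0"
      unfolding d1_def d2_def d3_def d4_def X_def Y_def by (simp_all add: dot_cross_self)
    show "r \<bullet> (X \<times> Y) = 0" using hQ[of "Suc i + k"] unfolding r_def X_def Y_def
      by (simp add: inner_commute)
    show "r \<bullet> l = 0" "r \<bullet> m = 0" unfolding r_def l_def m_def by (simp_all add: dot_cross_self)
    show "a \<bullet> l = 0" "b \<bullet> l = 0" "c \<bullet> m = 0" "e \<bullet> m = 0" unfolding al bl cm em
      by (simp_all add: dot_cross_self inner_commute)
    show "a \<bullet> d1 = 0" using hT[of i] unfolding a_def d1_def .
    show "b \<bullet> d2 = 0" using hT[of "Suc i"] unfolding b_def d2_def .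
    show "c \<bullet> d3 = 0" using hT[of "i + k"] unfolding c_def d3_def by simp
    show "e \<bullet> d4 = 0" using hT[of "Suc (i + k)"] unfolding e_def d4_def by simp
    show "d1 \<times> d2 \<noteq> 0" unfolding U using TP0 by blast
    show "d3 \<times> d4 \<noteq> 0" unfolding V using TP0 by blast
    show "a \<times> b \<noteq> 0" using TQs unfolding a_def b_def join_def by blast
    show "c \<times> e \<noteq> 0" using TQs[rule_format, of "i + k"] unfolding c_def e_def join_def by simp
    show "X \<noteq> 0" "Y \<noteq> 0" unfolding X_def Y_def using P0 by blast+
    show "X \<times> Y \<noteq> 0" using Ps[rule_format, of "Suc i + k"] unfolding X_def Y_def join_def by simp
    show "r \<noteq> 0" unfolding r_def using Q0 by blast
    show "l \<noteq> 0" using TQ0[rule_format, of i] unfolding a_def[symmetric] al by auto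
    show "m \<noteq> 0" using TQ0[rule_format, of "i + k"] unfolding c_def[symmetric] cm by auto
  qed
  then have "Tk k (Tk k Q) i \<bullet> (Tk k P (Suc i) \<times> Tk k P (Suc i + k)) = 0"
    unfolding U V a_def b_def c_def e_def by (simp add: Tk_eq[of k "Tk k Q"])
  then show "incident (Tk k (Tk k Q) i) (join (Tk k (Tk k P) i) (Tk k (Tk k P) (Suc i)))"
    by (rule side_from)
qed

lemma all_m:
  assumes gP: "generic k P" and gQ: "generic k Q"
    and i0: "inscribed Q P" and i1: "inscribed (Tk k Q) (Tk k P)"
  shows "inscribed ((Tk k ^^ m) Q) ((Tk k ^^ m) P) \<and> inscribed ((Tk k ^^ Suc m) Q) ((Tk k ^^ Suc m) P)"
proof (induction m)
  case 0
  then show ?case using i0 i1 by simp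
next
  case (Suc m)
  have gp: "\<And>j i. (Tk k ^^ j) P i \<noteq> 0 \<and> join ((Tk k ^^ j) P i) ((Tk k ^^ j) P (Suc i)) \<noteq> 0"
    using gP unfolding generic_def by blast
  have gq: "\<And>j i. (Tk k ^^ j) Q i \<noteq> 0 \<and> join ((Tk k ^^ j) Q i) ((Tk k ^^ j) Q (Suc i)) \<noteq> 0"
    using gQ unfolding generic_def by blast
  have e1: "Tk k ((Tk k ^^ m) P) = (Tk k ^^ Suc m) P" "Tk k ((Tk k ^^ m) Q) = (Tk k ^^ Suc m) Q" by simp_all
  have e2: "Tk k (Tk k ((Tk k ^^ m) P)) = (Tk k ^^ Suc (Suc m)) P"
     "Tk k (Tk k ((Tk k ^^ m) Q)) = (Tk k ^^ Suc (Suc m)) Q" by simp_all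
  have "inscribed (Tk k (Tk k ((Tk k ^^ m) Q))) (Tk k (Tk k ((Tk k ^^ m) P)))"
    apply (rule one_step)
    using gp[of m] gp[of "Suc m"] gq[of m] gq[of "Suc m"] Suc.IH unfolding e1 by blast+
  then show ?case using Suc.IH unfolding e2 by simp
qed

end

theorem theorem6:
  fixes n k :: nat and P Q :: "nat \<Rightarrow> real^3"
  assumes "n \<ge> 5" and "2 \<le> k" and "k \<le> n - 2"
    and "ngon n P" and "ngon n Q"
    and "generic k P" and "generic k Q"
    and "inscribed Q P"
    and "inscribed (Tk k Q) (Tk k P)"
  shows "inscribed ((Tk k ^^ 2) Q) ((Tk k ^^ 2) P)
    \<and> (\<forall>m\<ge>1. inscribed ((Tk k ^^ m) Q) ((Tk k ^^ m) P))"
proof -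
  have A: "\<And>m. inscribed ((Tk k ^^ m) Q) ((Tk k ^^ m) P)"
    using all_m[OF assms(6-9)] by blast
  show ?thesis using A by blast
qed

end
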